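(* For every $\varepsilon\in(0,\frac12]$ there exists a non-negative integer $\kappa\in\widetilde O(1/\varepsilon)$ such that for every protocol $\Pi=(\mathsf A,\mathsf B)$, either $\mathrm{val}(\mathsf A^{(\kappa)}_\Pi,\mathsf B)>1-\varepsilon$ or $\mathrm{val}(\mathsf A,\mathsf B^{(\kappa)}_\Pi)<\varepsilon$.
   Context: An $m$-round protocol $\Pi=(\mathsf A,\mathsf B)$ (no inputs, single-bit messages, parties possibly computationally unbounded) is identified with the complete binary tree of height $m$: nodes are binary strings of length at most $m$, the root is the empty string $\lambda$, the children of $u$ are $u0,u1$, and leaves are strings of length $m$. A control scheme assigns each non-leaf node to the party sending the next bit; $e_\Pi(u,ub)$ is the probability that the next bit is $b$ given transcript $u$; $\chi_\Pi$ maps each leaf to the parties' common output in $\{0,1\}$; $L_\Pi$ is the distribution of the leaf reached in a random execution, and $\mathrm{val}(\Pi)=\mathbb E_{\ell\leftarrow L_\Pi}[\chi_\Pi(\ell)]$. Recursive biased-continuation attackers: $\mathsf A^{(0)}_\Pi=\mathsf A$; for $i>0$, $\mathsf A^{(i)}_\Pi$ on an $\mathsf A$-controlled transcript $u$ samples a leaf $\ell\leftarrow L_{(\mathsf A^{(i-1)}_\Pi,\mathsf B)}$ conditioned on $\ell$ having prefix $u$ and $\chi_\Pi(\ell)=1$ (if no such leaf has positive probability, an arbitrary leaf extending $u$), and sends $\ell_{|u|+1}$; at a leaf it outputs $\chi_\Pi$ of that leaf. Analogously $\mathsf B^{(0)}_\Pi=\mathsf B$ and $\mathsf B^{(i)}_\Pi$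 on $\mathsf B$-controlled $u$ samples $\ell\leftarrow L_{(\mathsf A,\mathsf B^{(i-1)}_\Pi)}$ conditioned on prefix $u$ and $\chi_\Pi(\ell)=0$, and sends $\ell_{|u|+1}$. $\mathrm{val}(\mathsf A',\mathsf B')$ denotes the value of the protocol in which $\mathsf A',\mathsf B'$ take the roles of $\mathsf A,\mathsf B$ (same control scheme and output function). *)

theory Defs
  imports Complex_Main "HOL-Library.Sublist"
begin

text \<open>A protocol of height m is identified with the complete binary tree of height m.
  Nodes/transcripts are bool lists. A protocol is given by
   ctrl :: bool list \<Rightarrow> bool   (True = node controlled by A, False = by B),
   e :: bool list \<Rightarrow> real      (e u = probability that the next bit is True given u),
   chi :: bool list \<Rightarrow> bool    (common output at leaves).\<close>

definition wf_protocol :: "nat \<Rightarrow> (bool list \<Rightarrow> real) \<Rightarrow> bool" where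
  "wf_protocol m e \<longleftrightarrow> (\<forall>u. length u < m \<longrightarrow> 0 \<le> e u \<and> e u \<le> 1)"

definition leaf_prob :: "nat \<Rightarrow> (bool list \<Rightarrow> real) \<Rightarrow> bool list \<Rightarrow> real" where
  "leaf_prob m e l = (\<Prod>i<m. if l ! i then e (take i l) else 1 - e (take i l))"

definition prob_ev :: "nat \<Rightarrow> (bool list \<Rightarrow> real) \<Rightarrow> (bool list \<Rightarrow> bool) \<Rightarrow> real" where
  "prob_ev m e P = (\<Sum>l\<in>{l. length l = m \<and> P l}. leaf_prob m e l)"

definition val :: "nat \<Rightarrow> (bool list \<Rightarrow> real) \<Rightarrow> (bool list \<Rightarrow> bool) \<Rightarrow> real" where
  "val m e chi = prob_ev m e chi"

text \<open>One biased-continuation step. e is the joint edge function of the current pair of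
  parties; at nodes controlled by the attacking party (ctrl u = side) the next bit is drawn
  from a leaf sampled from L_e conditioned on prefix u and chi = target; if that event has
  probability 0, the arbitrary fallback fb u (probability of sending True) is used.\<close>
definition bc_step :: "nat \<Rightarrow> (bool list \<Rightarrow> bool) \<Rightarrow> bool \<Rightarrow> (bool list \<Rightarrow> bool) \<Rightarrow> bool
    \<Rightarrow> (bool list \<Rightarrow> real) \<Rightarrow> (bool list \<Rightarrow> real) \<Rightarrow> (bool list \<Rightarrow> real) \<Rightarrow> bool list \<Rightarrow> real" where
  "bc_step m ctrl side chi target e0 fb e u =
     (if ctrl u = side then
        (let d = prob_ev m e (\<lambda>l. prefix u l \<and> chi l = target) in
         if d > 0 then prob_ev m e (\<lambda>l. prefix (u @ [True]) l \<and> chi l = target) / d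
         else fb u)
      else e0 u)"

text \<open>Joint edge function of (A^(i), B): attacker side True, target output 1.
  fb i is the arbitrary fallback used by the i-th level attacker.\<close>
fun edgesA :: "nat \<Rightarrow> (bool list \<Rightarrow> bool) \<Rightarrow> (bool list \<Rightarrow> real) \<Rightarrow> (bool list \<Rightarrow> bool)
    \<Rightarrow> (nat \<Rightarrow> bool list \<Rightarrow> real) \<Rightarrow> nat \<Rightarrow> bool list \<Rightarrow> real" where
  "edgesA m ctrl e chi fb 0 = e"
| "edgesA m ctrl e chi fb (Suc i) =
     bc_step m ctrl True chi True e (fb (Suc i)) (edgesA m ctrl e chi fb i)"

text \<open>Joint edge function of (A, B^(i)): attacker side False (B), target output 0.\<close>
fun edgesB :: "nat \<Rightarrow> (bool list \<Rightarrow> bool) \<Rightarrow> (bool list \<Rightarrow> real) \<Rightarrow> (bool list \<Rightarrow> bool)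
    \<Rightarrow> (nat \<Rightarrow> bool list \<Rightarrow> real) \<Rightarrow> nat \<Rightarrow> bool list \<Rightarrow> real" where
  "edgesB m ctrl e chi fb 0 = e"
| "edgesB m ctrl e chi fb (Suc i) =
     bc_step m ctrl False chi False e (fb (Suc i)) (edgesB m ctrl e chi fb i)"

end

theory Submission
  imports Defs "HOL-Analysis.Analysis"
begin


lemma G2_deriv:
  fixes a y :: real and N :: nat
  defines "n \<equiv> Suc (Suc N)"
  shows "((\<lambda>y. (a * (1 - y ^ n)) ^ n) has_real_derivative
     (- (real n ^ 2 * a ^ n * (1 - y ^ n) ^ Suc N * y ^ Suc N))) (at y)"
proof -
  have n1: "n - 1 = Suc N" by (simp add: n_def)
  have "((\<lambda>y. (a * (1 - y ^ n)) ^ n) has_real_derivative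
     (real n * (a * (1 - y ^ n)) ^ (n - 1) * (a * (0 - real n * y ^ (n - 1))))) (at y)"
    by (intro derivative_eq_intros) auto
  moreover have "real n * (a * (1 - y ^ n)) ^ (n - 1) * (a * (0 - real n * y ^ (n - 1)))
     = - (real n ^ 2 * a ^ n * (1 - y ^ n) ^ Suc N * y ^ Suc N)"
  proof -
    define t where "t = 1 - y ^ n"
    define r where "r = real n"
    have an: "a ^ n = a * a ^ Suc N" by (simp add: n_def)
    show ?thesis unfolding n1 an t_def[symmetric] r_def[symmetric]
      by (simp add: power_mult_distrib power2_eq_square)
  qed
  ultimately show ?thesis by simp
qed

lemma alg2: "- (K * (c * t ^ N * (0 - r * (Y * y))) * (y * Y) + K * (t * t ^ N) * (c * Y))
   = K * c * t ^ N * Y * (r * (Y * y * y) - t)" for K c t r Y y :: real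
  by (simp add: algebra_simps)

lemma G2'_deriv:
  fixes a y :: real and N :: nat
  defines "n \<equiv> Suc (Suc N)"
  shows "((\<lambda>y. - (real n ^ 2 * a ^ n * (1 - y ^ n) ^ Suc N * y ^ Suc N)) has_real_derivative
     (real n ^ 2 * a ^ n * real (Suc N) * (1 - y ^ n) ^ N * y ^ N * (real n * y ^ n - (1 - y ^ n)))) (at y)"
proof -
  have n1: "n - 1 = Suc N" by (simp add: n_def)
  have "((\<lambda>y. - (real n ^ 2 * a ^ n * (1 - y ^ n) ^ Suc N * y ^ Suc N)) has_real_derivative
     (- (real n ^ 2 * a ^ n * (real (Suc N) * (1 - y ^ n) ^ (Suc N - 1) * (0 - real n * y ^ (n - 1))) * y ^ Suc N
       + real n ^ 2 * a ^ n * (1 - y ^ n) ^ Suc N * (real (Suc N) * y ^ (Suc N - 1))))) (at y)"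
    by (intro derivative_eq_intros) auto
  moreover have "(- (real n ^ 2 * a ^ n * (real (Suc N) * (1 - y ^ n) ^ (Suc N - 1) * (0 - real n * y ^ (n - 1))) * y ^ Suc N
       + real n ^ 2 * a ^ n * (1 - y ^ n) ^ Suc N * (real (Suc N) * y ^ (Suc N - 1))))
     = real n ^ 2 * a ^ n * real (Suc N) * (1 - y ^ n) ^ N * y ^ N * (real n * y ^ n - (1 - y ^ n))"
  proof -
    have yn: "y ^ n = y ^ N * y * y" by (simp add: n_def)
    have yn1: "y ^ (n - 1) = y ^ N * y" by (simp add: n_def)
    show ?thesis
      using alg2[of "real n ^ 2 * a ^ n" "real (Suc N)" "1 - y ^ n" N "real n" "y ^ N" y]
      by (simp only: yn1 diff_Suc_1 power_Suc yn)
  qed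
  ultimately show ?thesis by simp
qed


definition sS :: "nat \<Rightarrow> real" where "sS n = 1 / (real n + 1)"
definition xX :: "nat \<Rightarrow> real" where "xX n = sS n powr (1 / real n)"
definition aA :: "nat \<Rightarrow> real" where "aA n = xX n * (real n + 1) / real n"
definition Gam :: "nat \<Rightarrow> real \<Rightarrow> real" where
  "Gam n h = (if h \<le> xX n then 1 - h / aA n else (aA n * (1 - h ^ n)) ^ n)"
definition Rg :: "nat \<Rightarrow> real \<Rightarrow> real \<Rightarrow> bool" where
  "Rg n G H \<longleftrightarrow> 0 \<le> G \<and> G \<le> 1 \<and> 0 \<le> H \<and> H \<le> 1 \<and> Gam n (H powr (1 / real n)) \<le> G"

lemma powr_root_pow:
  assumes "1 \<le> n" "0 \<le> (G::real)"
  shows "(G powr (1 / real n)) ^ n = G"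
proof (cases "G = 0")
  case True then show ?thesis using assms by simp
next
  case False
  then have "G > 0" using assms by simp
  then have "(G powr (1 / real n)) ^ n = (G powr (1 / real n)) powr (real n)"
    by (simp add: powr_realpow)
  also have "\<dots> = G" using assms by (simp add: powr_powr)
  finally show ?thesis .
qed

lemma consts_facts:
  assumes "1 \<le> n"
  shows "0 < sS n" "sS n < 1" "0 < xX n" "xX n < 1" "xX n ^ n = sS n" "0 < aA n"
        "aA n * (1 - sS n) = xX n" "1 - xX n / aA n = sS n"
proof -
  show s0: "0 < sS n" by (simp add: sS_def)
  show s1: "sS n < 1" using assms by (simp add: sS_def)
  show x0: "0 < xX n" using s0 by (simp add: xX_def)
  have "sS n powr (1 / real n) < 1 powr (1 / real n)"
    using assms s0 s1 by (intro powr_less_mono2) auto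
  then show "xX n < 1" by (simp add: xX_def)
  show "xX n ^ n = sS n" unfolding xX_def using assms s0 by (intro powr_root_pow) auto
  show a0: "0 < aA n" using x0 assms by (simp add: aA_def)
  have n0: "real n > 0" using assms by simp
  have "1 - sS n = real n / (real n + 1)" using n0 by (simp add: sS_def field_simps)
  then show "aA n * (1 - sS n) = xX n" using n0 by (simp add: aA_def)
  then show "1 - xX n / aA n = sS n" using a0 by (simp add: field_simps)
qed

lemma convex_glue:
  fixes f :: "real \<Rightarrow> real"
  assumes c1: "convex_on {a..b} f" and c2: "convex_on {b..c} f" and "a \<le> b" "b \<le> c"
    and sup: "\<And>y. y \<in> {a..c} \<Longrightarrow> f b + m * (y - b) \<le> f y"
  shows "convex_on {a..c} f"
proof (rule convex_on_linorderI)
  show "convex {a..c}" by simp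
next
  fix t x y :: real
  assume t: "0 < t" "t < 1" and x: "x \<in> {a..c}" and y: "y \<in> {a..c}" and xy: "x < y"
  define z where "z = (1 - t) * x + t * y"
  have zx: "z - x = t * (y - x)" by (simp add: z_def algebra_simps)
  have yz: "y - z = (1 - t) * (y - x)" by (simp add: z_def algebra_simps)
  have zxy: "x \<le> z" "z \<le> y" using t xy zx yz by (smt (verit) mult_nonneg_nonneg)+
  have L: "(1 - t) * f x + t * f y = (f y - f x) / (y - x) * (z - x) + f x"
    using xy by (simp add: zx field_simps)
  have goal: "f z \<le> (f y - f x) / (y - x) * (z - x) + f x"
  proof (cases "y \<le> b")
    case True
    have "convex_on {x..y} f" by (rule convex_on_subset[OF c1]) (use x True in auto)
    then show ?thesis using convex_onD_Icc'[of x y f z] zxy by simp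
  next
    case yb: False
    show ?thesis
    proof (cases "b \<le> x")
      case True
      have "convex_on {x..y} f" by (rule convex_on_subset[OF c2]) (use y True in auto)
      then show ?thesis using convex_onD_Icc'[of x y f z] zxy by simp
    next
      case xb: False
      have sx: "f b + m * (x - b) \<le> f x" using sup x by simp
      have sy: "f b + m * (y - b) \<le> f y" using sup y by simp
      have key: "(f b - f x) * (y - x) \<le> (f y - f x) * (b - x)"
      proof -
        have "(f b - f x) * (y - x) = (f b - f x) * (y - b) + (f b - f x) * (b - x)" by (simp add: algebra_simps)
        also have "\<dots> \<le> (- m * (x - b)) * (y - b) + (f b - f x) * (b - x)"
          using sx yb by (intro add_right_mono mult_right_mono) auto
        also have "\<dots> = (m * (y - b)) * (b - x) + (f b - f x) * (b - x)" by (simp add: algebra_simps)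
        also have "\<dots> \<le> (f y - f b) * (b - x) + (f b - f x) * (b - x)"
          using sy xb by (intro add_right_mono mult_right_mono) auto
        also have "\<dots> = (f y - f x) * (b - x)" by (simp add: algebra_simps)
        finally show ?thesis .
      qed
      show ?thesis
      proof (cases "z \<le> b")
        case True
        have "convex_on {x..b} f" by (rule convex_on_subset[OF c1]) (use x xb in auto)
        then have fz: "f z \<le> (f b - f x) / (b - x) * (z - x) + f x"
          using convex_onD_Icc'[of x b f z] zxy True by simp
        have "(f b - f x) / (b - x) \<le> (f y - f x) / (y - x)"
          using key xb xy by (simp add: divide_simps)
        then have "(f b - f x) / (b - x) * (z - x) \<le> (f y - f x) / (y - x) * (z - x)"
          using zxy by (intro mult_right_mono) auto
        then show ?thesis using fz by simp
      next
        case False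
        have "convex_on {b..y} f" by (rule convex_on_subset[OF c2]) (use y yb in auto)
        then have fz: "f z \<le> (f b - f y) / (y - b) * (y - z) + f y"
          using convex_onD_Icc''[of b y f z] zxy False by simp
        have k2: "(f y - f x) * (y - b) \<le> (f y - f b) * (y - x)"
          using key by (simp add: algebra_simps)
        have "(f y - f x) / (y - x) \<le> (f y - f b) / (y - b)"
          using k2 yb xy by (simp add: divide_simps)
        then have "(f y - f x) / (y - x) * (y - z) \<le> (f y - f b) / (y - b) * (y - z)"
          using zxy by (intro mult_right_mono) auto
        moreover have "(f y - f x) / (y - x) * (z - x) + f x = f y - (f y - f x) / (y - x) * (y - z)"
          using xy by (simp add: field_simps)
        moreover have "(f b - f y) / (y - b) * (y - z) = - ((f y - f b) / (y - b) * (y - z))"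
          by (metis minus_diff_eq minus_divide_left mult_minus_left)
        ultimately show ?thesis using fz by linarith
      qed
    qed
  qed
  show "f ((1 - t) *\<^sub>R x + t *\<^sub>R y) \<le> (1 - t) * f x + t * f y"
    using goal L by (simp add: z_def)
qed


lemma convex_on_cong':
  assumes "convex_on A f" "\<And>x. x \<in> A \<Longrightarrow> f x = g x"
  shows "convex_on A g"
  using assms unfolding convex_on_def by (auto simp: convexD)

context fixes N :: nat
begin

abbreviation "nn \<equiv> Suc (Suc N)"

lemma Gdd_nonneg:
  assumes "xX nn \<le> w" "w \<le> 1"
  shows "0 \<le> real nn ^ 2 * aA nn ^ nn * real (Suc N) * (1 - w ^ nn) ^ N * w ^ N * (real nn * w ^ nn - (1 - w ^ nn))"
proof -
  have f: "0 < sS nn" "0 < xX nn" "xX nn ^ nn = sS nn" "0 < aA nn" using consts_facts[of nn] by auto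
  have w0: "0 \<le> w" using f assms by simp
  have "xX nn ^ nn \<le> w ^ nn" using assms f by (intro power_mono) auto
  then have ws: "sS nn \<le> w ^ nn" using f by simp
  have w1: "w ^ nn \<le> 1" using power_le_one[OF w0 assms(2)] .
  have "real nn * w ^ nn - (1 - w ^ nn) = (real nn + 1) * w ^ nn - 1" by (simp add: algebra_simps)
  also have "\<dots> \<ge> (real nn + 1) * sS nn - 1" using ws by (intro diff_right_mono mult_left_mono) auto
  also have "(real nn + 1) * sS nn - 1 = 0" by (simp add: sS_def)
  finally have "0 \<le> real nn * w ^ nn - (1 - w ^ nn)" .
  then show ?thesis using w0 w1 f by (intro mult_nonneg_nonneg) auto
qed

lemma Gd_mono:
  assumes "xX nn \<le> y" "y \<le> z" "z \<le> 1"
  shows "- (real nn ^ 2 * aA nn ^ nn * (1 - y ^ nn) ^ Suc N * y ^ Suc N)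
       \<le> - (real nn ^ 2 * aA nn ^ nn * (1 - z ^ nn) ^ Suc N * z ^ Suc N)"
proof (rule DERIV_nonneg_imp_nondecreasing[where f = "\<lambda>y. - (real nn ^ 2 * aA nn ^ nn * (1 - y ^ nn) ^ Suc N * y ^ Suc N)"])
  show "y \<le> z" by fact
  fix w assume w: "y \<le> w" "w \<le> z"
  show "\<exists>d. ((\<lambda>y. - (real nn ^ 2 * aA nn ^ nn * (1 - y ^ nn) ^ Suc N * y ^ Suc N)) has_real_derivative d) (at w) \<and> 0 \<le> d"
    by (rule exI, rule conjI, rule G2'_deriv, rule Gdd_nonneg) (use w assms in auto)
qed

lemma Gam2_convex: "convex_on {xX nn..1} (\<lambda>y. (aA nn * (1 - y ^ nn)) ^ nn)"
proof (rule convex_on_realI[where f' = "\<lambda>y. - (real nn ^ 2 * aA nn ^ nn * (1 - y ^ nn) ^ Suc N * y ^ Suc N)"])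
  show "connected {xX nn..1}" by simp
  fix x assume "x \<in> {xX nn..1}"
  show "((\<lambda>y. (aA nn * (1 - y ^ nn)) ^ nn) has_real_derivative
     - (real nn ^ 2 * aA nn ^ nn * (1 - x ^ nn) ^ Suc N * x ^ Suc N)) (at x)"
    by (rule G2_deriv)
next
  fix x y assume "x \<in> {xX nn..1}" "y \<in> {xX nn..1}" "x \<le> y"
  then show "- (real nn ^ 2 * aA nn ^ nn * (1 - x ^ nn) ^ Suc N * x ^ Suc N)
       \<le> - (real nn ^ 2 * aA nn ^ nn * (1 - y ^ nn) ^ Suc N * y ^ Suc N)"
    by (intro Gd_mono) auto
qed

lemma Gd_at_x: "- (real nn ^ 2 * aA nn ^ nn * (1 - xX nn ^ nn) ^ Suc N * xX nn ^ Suc N) = - 1 / aA nn"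
proof -
  have f: "0 < sS nn" "0 < xX nn" "xX nn ^ nn = sS nn" "0 < aA nn" "aA nn * (1 - sS nn) = xX nn"
    using consts_facts[of nn] by auto
  have e1: "real nn * aA nn * xX nn ^ Suc N = 1"
  proof -
    have "real nn * aA nn * xX nn ^ Suc N = (real nn + 1) * (xX nn * xX nn ^ Suc N)"
      by (simp add: aA_def)
    also have "xX nn * xX nn ^ Suc N = sS nn" using f(3) by simp
    finally show ?thesis by (simp add: sS_def)
  qed
  have e2: "aA nn ^ nn * (1 - sS nn) ^ Suc N = aA nn * xX nn ^ Suc N"
  proof -
    have "aA nn ^ nn * (1 - sS nn) ^ Suc N = aA nn * (aA nn ^ Suc N * (1 - sS nn) ^ Suc N)"
      by (simp only: power_Suc[of "aA nn" "Suc N"] mult.assoc)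
    also have "\<dots> = aA nn * xX nn ^ Suc N" by (simp only: power_mult_distrib[symmetric] f(5))
    finally show ?thesis .
  qed
  have "real nn ^ 2 * aA nn ^ nn * (1 - xX nn ^ nn) ^ Suc N * xX nn ^ Suc N
      = real nn ^ 2 * (aA nn ^ nn * (1 - sS nn) ^ Suc N) * xX nn ^ Suc N"
    by (simp only: f(3) mult.assoc)
  also have "\<dots> = real nn ^ 2 * (aA nn * xX nn ^ Suc N) * xX nn ^ Suc N" by (simp only: e2)
  also have "\<dots> = (real nn * aA nn * xX nn ^ Suc N) * (real nn * xX nn ^ Suc N)"
    by (simp add: power2_eq_square mult_ac)
  also have "\<dots> = real nn * xX nn ^ Suc N" using e1 by simp
  also have "\<dots> = 1 / aA nn" using e1 f(4) by (simp add: field_simps)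
  finally show ?thesis by simp
qed

lemma Gam2_tangent:
  assumes "xX nn \<le> y" "y \<le> 1"
  shows "sS nn - (y - xX nn) / aA nn \<le> (aA nn * (1 - y ^ nn)) ^ nn"
proof -
  have f: "0 < sS nn" "0 < xX nn" "xX nn ^ nn = sS nn" "0 < aA nn" "aA nn * (1 - sS nn) = xX nn"
    using consts_facts[of nn] by auto
  define phi where "phi = (\<lambda>y. (aA nn * (1 - y ^ nn)) ^ nn + y / aA nn)"
  have "phi (xX nn) \<le> phi y"
  proof (rule DERIV_nonneg_imp_nondecreasing[OF assms(1)])
    fix w assume w: "xX nn \<le> w" "w \<le> y"
    have d1: "DERIV (\<lambda>y. (aA nn * (1 - y ^ nn)) ^ nn) w :> (- (real nn ^ 2 * aA nn ^ nn * (1 - w ^ nn) ^ Suc N * w ^ Suc N))"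
      by (rule G2_deriv)
    have d2: "DERIV (\<lambda>y. y / aA nn) w :> 1 / aA nn"
      using f(4) by (intro derivative_eq_intros) auto
    have d: "DERIV phi w :> (- (real nn ^ 2 * aA nn ^ nn * (1 - w ^ nn) ^ Suc N * w ^ Suc N) + 1 / aA nn)"
      unfolding phi_def by (rule DERIV_add[OF d1 d2])
    have gm: "- (real nn ^ 2 * aA nn ^ nn * (1 - xX nn ^ nn) ^ Suc N * xX nn ^ Suc N)
       \<le> - (real nn ^ 2 * aA nn ^ nn * (1 - w ^ nn) ^ Suc N * w ^ Suc N)"
      by (rule Gd_mono) (use w assms in auto)
    have "- 1 / aA nn \<le> - (real nn ^ 2 * aA nn ^ nn * (1 - w ^ nn) ^ Suc N * w ^ Suc N)"
      using gm by (simp only: Gd_at_x)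
    then have "0 \<le> - (real nn ^ 2 * aA nn ^ nn * (1 - w ^ nn) ^ Suc N * w ^ Suc N) + 1 / aA nn"
      by (smt (verit) minus_divide_left)
    then show "\<exists>y. DERIV phi w :> y \<and> 0 \<le> y" using d by blast
  qed
  moreover have "(aA nn * (1 - xX nn ^ nn)) ^ nn = sS nn" using f by simp
  moreover have "(y - xX nn) / aA nn = y / aA nn - xX nn / aA nn" by (simp add: diff_divide_distrib)
  ultimately show ?thesis unfolding phi_def by linarith
qed

lemma Gam_convex: "convex_on {0..1} (Gam nn)"
proof -
  have f: "0 < sS nn" "0 < xX nn" "xX nn < 1" "xX nn ^ nn = sS nn" "0 < aA nn" "1 - xX nn / aA nn = sS nn"
    using consts_facts[of nn] by auto
  show ?thesis
  proof (rule convex_glue[where b = "xX nn" and m = "- 1 / aA nn"])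
    have "convex_on {0..xX nn} (\<lambda>h. 1 - h / aA nn)"
    proof (rule convex_on_linorderI)
      fix t x y :: real
      have "1 - ((1 - t) * x + t * y) / aA nn = (1 - t) * (1 - x / aA nn) + t * (1 - y / aA nn)"
        using f(5) by (simp add: field_simps)
      then show "1 - ((1 - t) *\<^sub>R x + t *\<^sub>R y) / aA nn \<le> (1 - t) * (1 - x / aA nn) + t * (1 - y / aA nn)"
        by simp
    qed simp
    then show "convex_on {0..xX nn} (Gam nn)"
      by (rule convex_on_cong') (auto simp: Gam_def)
    show "convex_on {xX nn..1} (Gam nn)"
      using Gam2_convex
    proof (rule convex_on_cong')
      fix y assume y: "y \<in> {xX nn..1}"
      show "(aA nn * (1 - y ^ nn)) ^ nn = Gam nn y"
      proof (cases "y = xX nn")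
        case True
        have "(aA nn * (1 - xX nn ^ nn)) ^ nn = sS nn" using consts_facts[of nn] by simp
        then show ?thesis using True f by (simp add: Gam_def)
      next
        case False then show ?thesis using y by (simp add: Gam_def)
      qed
    qed
    show "0 \<le> xX nn" "xX nn \<le> 1" using f by auto
    fix y :: real assume y: "y \<in> {0..1}"
    show "Gam nn (xX nn) + - 1 / aA nn * (y - xX nn) \<le> Gam nn y"
    proof (cases "y \<le> xX nn")
      case True then show ?thesis using f by (simp add: Gam_def field_simps)
    next
      case False
      then show ?thesis using Gam2_tangent[of y] y f by (simp add: Gam_def field_simps)
    qed
  qed
qed

end


lemma Gam_convex_n: "2 \<le> n \<Longrightarrow> convex_on {0..1} (Gam n)"
proof -
  assume "2 \<le> n"
  then obtain N where "n = Suc (Suc N)" by (metis add_2_eq_Suc le_Suc_ex)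
  then show ?thesis using Gam_convex[of N] by simp
qed

lemma Gam_antimono:
  assumes "1 \<le> n" "0 \<le> h" "h \<le> h'" "h' \<le> 1"
  shows "Gam n h' \<le> Gam n h"
proof -
  have f: "0 < sS n" "0 < xX n" "xX n < 1" "xX n ^ n = sS n" "0 < aA n"
    "aA n * (1 - sS n) = xX n" "1 - xX n / aA n = sS n"
    using consts_facts[OF assms(1)] by auto
  have n0: "0 < n" using assms by simp
  have pm: "(aA n * (1 - y ^ n)) ^ n \<le> (aA n * (1 - z ^ n)) ^ n" if "0 \<le> z" "z \<le> y" "y \<le> 1" for y z
  proof (rule power_mono)
    have "z ^ n \<le> y ^ n" using that by (intro power_mono) auto
    then show "aA n * (1 - y ^ n) \<le> aA n * (1 - z ^ n)" using f by (intro mult_left_mono) auto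
    have "y ^ n \<le> 1" using that by (intro power_le_one) auto
    then show "0 \<le> aA n * (1 - y ^ n)" using f by auto
  qed
  show ?thesis
  proof (cases "h' \<le> xX n")
    case True
    then have "h \<le> xX n" using assms by simp
    then show ?thesis using True assms f by (simp add: Gam_def divide_right_mono)
  next
    case h'x: False
    show ?thesis
    proof (cases "h \<le> xX n")
      case True
      have "(aA n * (1 - h' ^ n)) ^ n \<le> (aA n * (1 - xX n ^ n)) ^ n"
        using pm[of "xX n" h'] h'x f assms by auto
      also have "\<dots> = sS n" using f by simp
      also have "sS n \<le> 1 - h / aA n"
        using True f divide_right_mono[OF True, of "aA n"] by linarith
      finally show ?thesis using True h'x by (simp add: Gam_def)
    next
      case False
      then show ?thesis using h'x pm[of h h'] assms by (simp add: Gam_def)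
    qed
  qed
qed

lemma Gam_0: "1 \<le> n \<Longrightarrow> Gam n 0 = 1"
  using consts_facts[of n] by (simp add: Gam_def)

lemma Gam_1: "1 \<le> n \<Longrightarrow> Gam n 1 = 0"
  using consts_facts[of n] by (simp add: Gam_def)

lemma Gam_le1: "1 \<le> n \<Longrightarrow> 0 \<le> h \<Longrightarrow> h \<le> 1 \<Longrightarrow> Gam n h \<le> 1"
  using Gam_antimono[of n 0 h] Gam_0[of n] by simp

lemma powr_n_facts:
  assumes "1 \<le> n" "0 \<le> (G::real)" "G \<le> 1"
  shows "0 \<le> G powr (1 / real n)" "G powr (1 / real n) \<le> 1" "(G powr (1 / real n)) ^ n = G"
  using assms by (auto intro: powr_le1 powr_root_pow)

lemma Rg_sym:
  assumes n: "1 \<le> n" and R: "Rg n G H"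
  shows "Rg n H G"
proof -
  have f: "0 < sS n" "0 < xX n" "xX n < 1" "xX n ^ n = sS n" "0 < aA n"
    "aA n * (1 - sS n) = xX n" "1 - xX n / aA n = sS n"
    using consts_facts[OF n] by auto
  have n0: "0 < n" using n by simp
  have r: "0 \<le> G" "G \<le> 1" "0 \<le> H" "H \<le> 1" "Gam n (H powr (1 / real n)) \<le> G"
    using R by (auto simp: Rg_def)
  define g where "g = G powr (1 / real n)"
  define h where "h = H powr (1 / real n)"
  have g: "0 \<le> g" "g \<le> 1" "g ^ n = G" using powr_n_facts[OF n r(1,2)] by (auto simp: g_def)
  have h: "0 \<le> h" "h \<le> 1" "h ^ n = H" using powr_n_facts[OF n r(3,4)] by (auto simp: h_def)
  have gx: "g \<le> xX n \<longleftrightarrow> G \<le> sS n"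
    using power_mono_iff[of g "xX n" n] g f n0 by auto
  have hx: "h \<le> xX n \<longleftrightarrow> H \<le> sS n"
    using power_mono_iff[of h "xX n" n] h f n0 by auto
  have G0: "Gam n h \<le> G" using r(5) by (simp add: h_def)
  have "Gam n g \<le> H"
  proof (cases "h \<le> xX n")
    case hle: True
    then have A: "1 - h / aA n \<le> G" using G0 by (simp add: Gam_def)
    show ?thesis
    proof (cases "g \<le> xX n")
      case True
      then have "G \<le> sS n" using gx by simp
      have "h / aA n \<le> xX n / aA n" by (rule divide_right_mono) (use hle f in auto)
      then have "sS n \<le> G" using A f by linarith
      then have "g = xX n" using gx True power_mono_iff[of "xX n" g n] g f n0 by auto
      have "xX n / aA n \<le> h / aA n" using A \<open>G \<le> sS n\<close> f by simp
      then have "xX n \<le> h" using f by (simp add: divide_right_mono_neg divide_le_cancel)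
      then have "h = xX n" using hle by simp
      then show ?thesis using \<open>g = xX n\<close> f h by (simp add: Gam_def)
    next
      case False
      have "aA n - h \<le> aA n * G" using A f by (simp add: field_simps)
      then have "aA n * (1 - G) \<le> h" by (simp add: algebra_simps)
      moreover have "0 \<le> aA n * (1 - G)" using f r by simp
      ultimately have "(aA n * (1 - G)) ^ n \<le> h ^ n" by (rule power_mono)
      then show ?thesis using False g h by (simp add: Gam_def)
    qed
  next
    case hgt: False
    then have "(aA n * (1 - H)) ^ n \<le> g ^ n" using G0 g h by (simp add: Gam_def)
    moreover have "0 \<le> aA n * (1 - H)" using f r by simp
    ultimately have B: "aA n * (1 - H) \<le> g" using power_mono_iff[of "aA n * (1 - H)" g n] g n0 by simp
    show ?thesis
    proof (cases "g \<le> xX n")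
      case True
      have "1 - g / aA n \<le> H"
      proof -
        have "g / aA n \<ge> 1 - H" using B f by (simp add: field_simps)
        then show ?thesis by simp
      qed
      then show ?thesis using True by (simp add: Gam_def)
    next
      case False
      then have "sS n < G" using gx by simp
      then have "aA n * (1 - G) < aA n * (1 - sS n)" using f by (intro mult_strict_left_mono) auto
      then have "aA n * (1 - G) \<le> h" using f hgt by simp
      moreover have "0 \<le> aA n * (1 - G)" using f r by simp
      ultimately have "(aA n * (1 - G)) ^ n \<le> h ^ n" by (rule power_mono)
      then show ?thesis using False g h by (simp add: Gam_def)
    qed
  qed
  then show ?thesis using r by (simp add: Rg_def g_def)
qed

lemma Rg_s:
  assumes n: "1 \<le> n" and R: "Rg n G H"
  shows "sS n \<le> G \<or> sS n \<le> H"
proof -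
  have f: "0 < sS n" "0 < xX n" "xX n < 1" "xX n ^ n = sS n" "0 < aA n"
    "aA n * (1 - sS n) = xX n" "1 - xX n / aA n = sS n"
    using consts_facts[OF n] by auto
  have n0: "0 < n" using n by simp
  have r: "0 \<le> G" "G \<le> 1" "0 \<le> H" "H \<le> 1" "Gam n (H powr (1 / real n)) \<le> G"
    using R by (auto simp: Rg_def)
  define h where "h = H powr (1 / real n)"
  have h: "0 \<le> h" "h \<le> 1" "h ^ n = H" using powr_n_facts[OF n r(3,4)] by (auto simp: h_def)
  show ?thesis
  proof (cases "h \<le> xX n")
    case True
    then have "1 - h / aA n \<le> G" using r(5) by (simp add: Gam_def h_def)
    moreover have "h / aA n \<le> xX n / aA n" by (rule divide_right_mono) (use True f in auto)
    ultimately show ?thesis using f by linarith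
  next
    case False
    then have "xX n ^ n \<le> h ^ n" using f by (intro power_mono) auto
    then show ?thesis using f h by simp
  qed
qed

lemma Rg_G1: "1 \<le> n \<Longrightarrow> 0 \<le> G \<Longrightarrow> G \<le> 1 \<Longrightarrow> Rg n G 1"
  using Gam_1[of n] by (simp add: Rg_def)

lemma Rg_1H: "1 \<le> n \<Longrightarrow> 0 \<le> H \<Longrightarrow> H \<le> 1 \<Longrightarrow> Rg n 1 H"
  using Gam_le1[of n "H powr (1 / real n)"] powr_n_facts[of n H] by (simp add: Rg_def)

lemma gm_super:
  assumes n: "1 \<le> n" and x: "\<And>k. 0 \<le> x k" and y: "\<And>k. 0 \<le> y k"
  shows "(\<Prod>k<n. x k) powr (1 / real n) + (\<Prod>k<n. y k) powr (1 / real n)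
       \<le> (\<Prod>k<n. x k + y k) powr (1 / real n)"
proof (cases "\<exists>k<n. x k + y k = 0")
  case True
  then obtain k where k: "k < n" "x k + y k = 0" by blast
  then have "x k = 0" "y k = 0" using x[of k] y[of k] by auto
  then have px: "(\<Prod>k<n. x k) = 0" and py: "(\<Prod>k<n. y k) = 0" using k by (auto intro: prod_zero)
  have "(\<Prod>k<n. x k) powr (1 / real n) + (\<Prod>k<n. y k) powr (1 / real n) = 0"
    by (simp only: px py) simp
  then show ?thesis by simp
next
  case False
  define D where "D k = x k + y k" for k
  have D: "\<And>k. k < n \<Longrightarrow> 0 < D k" using False x y unfolding D_def by (smt (verit))
  define P where "P = (\<Prod>k<n. D k)"
  have P: "0 < P" unfolding P_def using D by (intro prod_pos) auto
  have cardn: "card {..<n} = n" by simp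
  have "0 \<in> {..<n}" using n by simp
  then have ne: "{..<n} \<noteq> {}" by blast
  have am1: "(\<Prod>k<n. x k / D k) powr (1 / real n) \<le> (\<Sum>k<n. (x k / D k) / real n)"
    using arith_geom_mean[of "{..<n}" "\<lambda>k. x k / D k"] ne x D cardn by (auto intro: divide_nonneg_pos)
  have am2: "(\<Prod>k<n. y k / D k) powr (1 / real n) \<le> (\<Sum>k<n. (y k / D k) / real n)"
    using arith_geom_mean[of "{..<n}" "\<lambda>k. y k / D k"] ne y D cardn by (auto intro: divide_nonneg_pos)
  have s1: "(\<Sum>k<n. (x k / D k) / real n) + (\<Sum>k<n. (y k / D k) / real n) = 1"
  proof -
    have "(\<Sum>k<n. (x k / D k) / real n) + (\<Sum>k<n. (y k / D k) / real n)
        = (\<Sum>k<n. ((x k + y k) / D k) / real n)"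
      by (simp add: sum.distrib[symmetric] add_divide_distrib)
    also have "\<dots> = (\<Sum>k<n. 1 / real n)"
    proof (rule sum.cong)
      fix k assume "k \<in> {..<n}"
      then have "0 < D k" using D by simp
      then show "((x k + y k) / D k) / real n = 1 / real n" by (simp add: D_def)
    qed simp
    also have "\<dots> = 1" using n by simp
    finally show ?thesis .
  qed
  have q1: "(\<Prod>k<n. x k / D k) powr (1 / real n) = (\<Prod>k<n. x k) powr (1 / real n) / P powr (1 / real n)"
    by (simp add: prod_dividef powr_divide P_def)
  have q2: "(\<Prod>k<n. y k / D k) powr (1 / real n) = (\<Prod>k<n. y k) powr (1 / real n) / P powr (1 / real n)"
    by (simp add: prod_dividef powr_divide P_def)
  have Pp: "0 < P powr (1 / real n)" using P by simp
  have "((\<Prod>k<n. x k) powr (1 / real n) + (\<Prod>k<n. y k) powr (1 / real n)) / P powr (1 / real n) \<le> 1"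
    using am1 am2 s1 q1 q2 by (simp add: add_divide_distrib)
  then show ?thesis using Pp by (simp add: P_def D_def divide_le_eq)
qed

lemma pow_powr_inv: "1 \<le> n \<Longrightarrow> 0 \<le> (p::real) \<Longrightarrow> (p ^ n) powr (1 / real n) = p"
proof (cases "p = 0")
  case False
  assume "1 \<le> n" "0 \<le> p"
  then have "p > 0" using False by simp
  then have "(p ^ n) powr (1 / real n) = (p powr real n) powr (1 / real n)" by (simp add: powr_realpow)
  also have "\<dots> = p" using \<open>1 \<le> n\<close> \<open>p > 0\<close> by (simp add: powr_powr)
  finally show ?thesis .
qed simp

lemma Rg_comb:
  assumes n: "2 \<le> n" and p: "0 \<le> p" "p \<le> 1"
    and R1: "Rg n G1 (\<Prod>k<n. \<beta> k)" and R0: "Rg n G0 (\<Prod>k<n. \<gamma> k)"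
    and b: "\<And>k. 0 \<le> \<beta> k \<and> \<beta> k \<le> 1" and c: "\<And>k. 0 \<le> \<gamma> k \<and> \<gamma> k \<le> 1"
  shows "Rg n (p * G1 + (1 - p) * G0) (\<Prod>k<n. p * \<beta> k + (1 - p) * \<gamma> k)"
proof -
  have n1: "1 \<le> n" using n by simp
  have r1: "0 \<le> G1" "G1 \<le> 1" "Gam n ((\<Prod>k<n. \<beta> k) powr (1 / real n)) \<le> G1" using R1 by (auto simp: Rg_def)
  have r0: "0 \<le> G0" "G0 \<le> 1" "Gam n ((\<Prod>k<n. \<gamma> k) powr (1 / real n)) \<le> G0" using R0 by (auto simp: Rg_def)
  have pb: "0 \<le> (\<Prod>k<n. \<beta> k)" "(\<Prod>k<n. \<beta> k) \<le> 1" using b by (auto intro: prod_nonneg prod_le_1)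
  have pc: "0 \<le> (\<Prod>k<n. \<gamma> k)" "(\<Prod>k<n. \<gamma> k) \<le> 1" using c by (auto intro: prod_nonneg prod_le_1)
  have cb: "\<And>k. 0 \<le> p * \<beta> k + (1 - p) * \<gamma> k \<and> p * \<beta> k + (1 - p) * \<gamma> k \<le> 1"
  proof -
    fix k
    have "p * \<beta> k \<le> p" "(1 - p) * \<gamma> k \<le> 1 - p" using b[of k] c[of k] p
      by (auto intro: mult_left_le)
    then show "0 \<le> p * \<beta> k + (1 - p) * \<gamma> k \<and> p * \<beta> k + (1 - p) * \<gamma> k \<le> 1"
      using b[of k] c[of k] p by auto
  qed
  have pd: "0 \<le> (\<Prod>k<n. p * \<beta> k + (1 - p) * \<gamma> k)" "(\<Prod>k<n. p * \<beta> k + (1 - p) * \<gamma> k) \<le> 1"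
    using cb by (auto intro: prod_nonneg prod_le_1)
  define h1 where "h1 = (\<Prod>k<n. \<beta> k) powr (1 / real n)"
  define h0 where "h0 = (\<Prod>k<n. \<gamma> k) powr (1 / real n)"
  define h where "h = (\<Prod>k<n. p * \<beta> k + (1 - p) * \<gamma> k) powr (1 / real n)"
  have h1: "0 \<le> h1" "h1 \<le> 1" unfolding h1_def using powr_n_facts[OF n1 pb] by auto
  have h0: "0 \<le> h0" "h0 \<le> 1" unfolding h0_def using powr_n_facts[OF n1 pc] by auto
  have h: "h \<le> 1" unfolding h_def using powr_n_facts[OF n1 pd] by auto
  have e1: "(\<Prod>k<n. p * \<beta> k) powr (1 / real n) = p * h1"
    unfolding h1_def using p n1 by (simp add: prod.distrib powr_mult pow_powr_inv)
  have e0: "(\<Prod>k<n. (1 - p) * \<gamma> k) powr (1 / real n) = (1 - p) * h0"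
    unfolding h0_def using p n1 by (simp add: prod.distrib powr_mult pow_powr_inv)
  have sup: "p * h1 + (1 - p) * h0 \<le> h"
    using gm_super[OF n1, of "\<lambda>k. p * \<beta> k" "\<lambda>k. (1 - p) * \<gamma> k"] b c p e1 e0
    unfolding h_def by auto
  have m0: "0 \<le> p * h1 + (1 - p) * h0" using h1 h0 p by auto
  have "Gam n h \<le> Gam n (p * h1 + (1 - p) * h0)"
    using Gam_antimono[OF n1 m0 sup h] .
  also have "Gam n (p * h1 + (1 - p) * h0) \<le> (1 - p) * Gam n h0 + p * Gam n h1"
    using convex_onD[OF Gam_convex_n[OF n], of p h0 h1] p h1 h0 by (simp add: add.commute)
  also have "\<dots> \<le> (1 - p) * G0 + p * G1"
    using r1(3) r0(3) p unfolding h1_def h0_def by (intro add_mono mult_left_mono) auto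
  finally have "Gam n h \<le> p * G1 + (1 - p) * G0" by simp
  moreover have "0 \<le> p * G1 + (1 - p) * G0" using r1 r0 p by auto
  moreover have "p * G1 + (1 - p) * G0 \<le> 1"
  proof -
    have "p * G1 \<le> p" "(1 - p) * G0 \<le> 1 - p" using r1 r0 p by (auto intro: mult_left_le)
    then show ?thesis by simp
  qed
  ultimately show ?thesis using pd unfolding Rg_def h_def by auto
qed




declare edgesA.simps(2)[simp del] edgesB.simps(2)[simp del]

definition edge :: "(bool list \<Rightarrow> real) \<Rightarrow> bool list \<Rightarrow> bool \<Rightarrow> real" where
  "edge E u b = (if b then E u else 1 - E u)"

definition reach :: "(bool list \<Rightarrow> real) \<Rightarrow> bool list \<Rightarrow> real" where
  "reach E u = (\<Prod>i<length u. edge E (take i u) (u ! i))"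

lemma reach_Nil[simp]: "reach E [] = 1"
  by (simp add: reach_def)

lemma reach_snoc: "reach E (u @ [b]) = reach E u * edge E u b"
proof -
  have "reach E (u @ [b]) = (\<Prod>i<Suc (length u). edge E (take i (u @ [b])) ((u @ [b]) ! i))"
    by (simp add: reach_def)
  also have "\<dots> = (\<Prod>i<length u. edge E (take i (u @ [b])) ((u @ [b]) ! i)) * edge E u b"
    by (simp add: prod.lessThan_Suc)
  also have "(\<Prod>i<length u. edge E (take i (u @ [b])) ((u @ [b]) ! i)) = reach E u"
    unfolding reach_def by (intro prod.cong) (auto simp: nth_append)
  finally show ?thesis .
qed

lemma leaf_prob_reach: "length l = m \<Longrightarrow> leaf_prob m E l = reach E l"
  by (simp add: leaf_prob_def reach_def edge_def)

fun Vd :: "nat \<Rightarrow> (bool list \<Rightarrow> real) \<Rightarrow> (bool list \<Rightarrow> bool) \<Rightarrow> bool list \<Rightarrow> real" where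
  "Vd 0 E P u = (if P u then 1 else 0)"
| "Vd (Suc d) E P u = E u * Vd d E P (u @ [True]) + (1 - E u) * Vd d E P (u @ [False])"

lemma finite_len: "finite {l::bool list. length l = m}"
  using finite_lists_length_eq[of "UNIV::bool set" m] by simp

lemma prob_ev_Vd:
  assumes "length u + d = m"
  shows "prob_ev m E (\<lambda>l. prefix u l \<and> P l) = reach E u * Vd d E P u"
  using assms
proof (induction d arbitrary: u)
  case 0
  then have "{l. length l = m \<and> prefix u l \<and> P l} = (if P u then {u} else {})"
    by (auto simp: prefix_def)
  then show ?case using 0 by (simp add: prob_ev_def leaf_prob_reach)
next
  case (Suc d)
  let ?S = "\<lambda>v. {l. length l = m \<and> prefix v l \<and> P l}"
  have eq: "?S u = ?S (u @ [True]) \<union> ?S (u @ [False])"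
  proof (intro set_eqI iffI)
    fix l assume "l \<in> ?S u"
    then obtain zs where l: "l = u @ zs" "length l = m" "P l" by (auto simp: prefix_def)
    then have "zs \<noteq> []" using Suc.prems by auto
    then obtain z zs' where "zs = z # zs'" by (cases zs) auto
    then show "l \<in> ?S (u @ [True]) \<union> ?S (u @ [False])" using l by (cases z) (auto simp: prefix_def)
  next
    fix l assume "l \<in> ?S (u @ [True]) \<union> ?S (u @ [False])"
    then show "l \<in> ?S u" by (auto simp: prefix_def)
  qed
  have disj: "?S (u @ [True]) \<inter> ?S (u @ [False]) = {}" by (auto simp: prefix_def)
  have fin: "finite (?S v)" for v by (rule finite_subset[OF _ finite_len[of m]]) auto
  have "prob_ev m E (\<lambda>l. prefix u l \<and> P l) = sum (leaf_prob m E) (?S u)" by (simp add: prob_ev_def)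
  also have "\<dots> = sum (leaf_prob m E) (?S (u @ [True])) + sum (leaf_prob m E) (?S (u @ [False]))"
    unfolding eq by (rule sum.union_disjoint[OF fin fin disj])
  finally have tot: "prob_ev m E (\<lambda>l. prefix u l \<and> P l) = sum (leaf_prob m E) (?S (u @ [True])) + sum (leaf_prob m E) (?S (u @ [False]))" .
  have hb: "sum (leaf_prob m E) (?S (u @ [b])) = reach E (u @ [b]) * Vd d E P (u @ [b])" for b
    using Suc.IH[of "u @ [b]"] Suc.prems by (simp add: prob_ev_def)
  show ?case unfolding tot hb by (simp add: reach_snoc edge_def algebra_simps)
qed

definition Vv :: "nat \<Rightarrow> (bool list \<Rightarrow> real) \<Rightarrow> (bool list \<Rightarrow> bool) \<Rightarrow> bool list \<Rightarrow> real" where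
  "Vv m E P u = Vd (m - length u) E P u"

lemma Vv_leaf: "m \<le> length u \<Longrightarrow> Vv m E P u = (if P u then 1 else 0)"
  by (simp add: Vv_def)

lemma Vv_node: "length u < m \<Longrightarrow>
    Vv m E P u = E u * Vv m E P (u @ [True]) + (1 - E u) * Vv m E P (u @ [False])"
proof -
  assume "length u < m"
  then have "m - length u = Suc (m - Suc (length u))" by simp
  then show ?thesis by (simp add: Vv_def)
qed

lemma prob_ev_Vv: "length u \<le> m \<Longrightarrow> prob_ev m E (\<lambda>l. prefix u l \<and> P l) = reach E u * Vv m E P u"
  using prob_ev_Vd[of u "m - length u" m E P] by (simp add: Vv_def)

lemma val_Vv: "val m E chi = Vv m E chi []"
  using prob_ev_Vv[of "[]" m E chi] by (simp add: val_def)

lemma Vd_compl: "Vd d E (\<lambda>l. \<not> P l) u = 1 - Vd d E P u"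
proof (induction d arbitrary: u)
  case 0 then show ?case by simp
next
  case (Suc d)
  have "Vd (Suc d) E (\<lambda>l. \<not> P l) u = E u * (1 - Vd d E P (u @ [True])) + (1 - E u) * (1 - Vd d E P (u @ [False]))"
    by (simp only: Vd.simps Suc.IH)
  then show ?case by (simp add: algebra_simps)
qed

lemma Vv_compl: "Vv m E (\<lambda>l. \<not> P l) u = 1 - Vv m E P u"
  by (simp add: Vv_def Vd_compl)

definition wfE :: "nat \<Rightarrow> (bool list \<Rightarrow> real) \<Rightarrow> bool" where
  "wfE m E \<longleftrightarrow> (\<forall>u. length u < m \<longrightarrow> 0 \<le> E u \<and> E u \<le> 1)"

lemma conv01:
  fixes t x y :: real
  assumes "0 \<le> t" "t \<le> 1" "0 \<le> x" "x \<le> 1" "0 \<le> y" "y \<le> 1"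
  shows "0 \<le> t * x + (1 - t) * y \<and> t * x + (1 - t) * y \<le> 1"
proof -
  have "t * x \<le> t" "(1 - t) * y \<le> 1 - t" using assms by (auto intro: mult_left_le)
  then show ?thesis using assms by auto
qed

lemma Vv_range: "wfE m E \<Longrightarrow> 0 \<le> Vv m E P u \<and> Vv m E P u \<le> 1"
proof (induction "m - length u" arbitrary: u)
  case 0 then show ?case by (simp add: Vv_leaf)
next
  case (Suc d)
  then have lt: "length u < m" by simp
  have "0 \<le> E u" "E u \<le> 1" using Suc.prems lt by (auto simp: wfE_def)
  moreover have "0 \<le> Vv m E P (u @ [b]) \<and> Vv m E P (u @ [b]) \<le> 1" for b
    using Suc.hyps(1)[of "u @ [b]"] Suc.hyps(2) Suc.prems by simp
  ultimately show ?case by (simp add: Vv_node[OF lt] conv01)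
qed

lemma reach_nonneg: "wfE m E \<Longrightarrow> length u \<le> m \<Longrightarrow> 0 \<le> reach E u"
  unfolding reach_def
proof (intro prod_nonneg)
  fix i assume "wfE m E" "length u \<le> m" "i \<in> {..<length u}"
  then have "length (take i u) < m" by simp
  then show "0 \<le> edge E (take i u) (u ! i)" using \<open>wfE m E\<close> by (auto simp: wfE_def edge_def)
qed

lemma edgesA_nonA: "\<not> ctrl u \<Longrightarrow> edgesA m ctrl e chi f k u = e u"
  by (cases k) (simp_all add: bc_step_def edgesA.simps)

lemma edgesA_A:
  assumes "ctrl u" "length u < m"
  shows "edgesA m ctrl e chi f (Suc k) u =
    (if reach (edgesA m ctrl e chi f k) u * Vv m (edgesA m ctrl e chi f k) chi u > 0
     then edgesA m ctrl e chi f k u * Vv m (edgesA m ctrl e chi f k) chi (u @ [True])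
            / Vv m (edgesA m ctrl e chi f k) chi u
     else f (Suc k) u)"
proof -
  let ?E = "edgesA m ctrl e chi f k"
  have d: "prob_ev m ?E (\<lambda>l. prefix u l \<and> chi l) = reach ?E u * Vv m ?E chi u"
    using prob_ev_Vv[of u m ?E chi] assms by simp
  have nu: "prob_ev m ?E (\<lambda>l. prefix (u @ [True]) l \<and> chi l) = reach ?E u * (?E u * Vv m ?E chi (u @ [True]))"
    using prob_ev_Vv[of "u @ [True]" m ?E chi] assms by (simp add: reach_snoc edge_def)
  show ?thesis
  proof (cases "reach ?E u * Vv m ?E chi u > 0")
    case True
    then have "reach ?E u \<noteq> 0" by auto
    then show ?thesis using True assms by (simp add: bc_step_def d nu Let_def edgesA.simps)
  next
    case False
    then show ?thesis using assms by (simp add: bc_step_def d nu Let_def edgesA.simps)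
  qed
qed

lemma edgesB_dual: "edgesB m ctrl e chi f k = edgesA m (\<lambda>u. \<not> ctrl u) e (\<lambda>l. \<not> chi l) f k"
  apply (induction k)
   apply simp
  apply (rule ext)
  apply (simp add: bc_step_def Let_def edgesA.simps edgesB.simps)
  done


definition frange :: "(nat \<Rightarrow> bool list \<Rightarrow> real) \<Rightarrow> bool" where
  "frange f \<longleftrightarrow> (\<forall>i u. 0 \<le> f i u \<and> f i u \<le> 1)"

lemma wfE_edgesA:
  assumes wf: "wfE m e" and fr: "frange f"
  shows "wfE m (edgesA m ctrl e chi f k)"
proof (induction k)
  case 0 then show ?case using wf by simp
next
  case (Suc k)
  let ?E = "edgesA m ctrl e chi f k"
  show ?case unfolding wfE_def
  proof (intro allI impI)
    fix u :: "bool list" assume lt: "length u < m"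
    show "0 \<le> edgesA m ctrl e chi f (Suc k) u \<and> edgesA m ctrl e chi f (Suc k) u \<le> 1"
    proof (cases "ctrl u")
      case False
      have "edgesA m ctrl e chi f (Suc k) u = e u" using False by (rule edgesA_nonA)
      then show ?thesis using wf lt by (simp add: wfE_def)
    next
      case True
      have E: "0 \<le> ?E u" "?E u \<le> 1" using Suc lt by (auto simp: wfE_def)
      have V: "0 \<le> Vv m ?E chi v" "Vv m ?E chi v \<le> 1" for v using Vv_range[OF Suc] by auto
      have Vn: "Vv m ?E chi u = ?E u * Vv m ?E chi (u @ [True]) + (1 - ?E u) * Vv m ?E chi (u @ [False])"
        by (rule Vv_node[OF lt])
      show ?thesis
      proof (cases "reach ?E u * Vv m ?E chi u > 0")
        case pos: True
        then have Vp: "Vv m ?E chi u > 0" using V[of u] by (cases "Vv m ?E chi u = 0") auto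
        have "0 \<le> (1 - ?E u) * Vv m ?E chi (u @ [False])" using E V by auto
        then have le: "?E u * Vv m ?E chi (u @ [True]) \<le> Vv m ?E chi u" using Vn by linarith
        have ge: "0 \<le> ?E u * Vv m ?E chi (u @ [True])" using E V by auto
        show ?thesis using edgesA_A[where ctrl=ctrl and u=u and m=m and e=e and chi=chi and f=f and k=k, OF True lt] pos Vp le ge
          by (simp add: divide_le_eq_1)
      next
        case False
        then show ?thesis using edgesA_A[where ctrl=ctrl and u=u and m=m and e=e and chi=chi and f=f and k=k, OF True lt] fr by (simp add: frange_def)
      qed
    qed
  qed
qed

lemma edge_range: "wfE m E \<Longrightarrow> length u < m \<Longrightarrow> 0 \<le> edge E u b \<and> edge E u b \<le> 1"
  by (auto simp: wfE_def edge_def)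

lemma mono_step:
  assumes wf: "wfE m e" and fr: "frange f"
  shows "length u \<le> m \<Longrightarrow> reach (edgesA m ctrl e chi f k) u > 0 \<Longrightarrow>
     Vv m (edgesA m ctrl e chi f k) chi u \<le> Vv m (edgesA m ctrl e chi f (Suc k)) chi u"
proof (induction "m - length u" arbitrary: u)
  case 0 then show ?case by (simp add: Vv_leaf)
next
  case (Suc d)
  have lt: "length u < m" using Suc.hyps(2) by simp
  let ?E = "edgesA m ctrl e chi f k"
  let ?F = "edgesA m ctrl e chi f (Suc k)"
  have wE: "wfE m ?E" and wF: "wfE m ?F" using wfE_edgesA[OF wf fr] by auto
  define V where "V b = Vv m ?E chi (u @ [b])" for b
  define W where "W b = Vv m ?F chi (u @ [b])" for b
  have Vr: "0 \<le> V b" "V b \<le> 1" for b using Vv_range[OF wE] by (auto simp: V_def)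
  have Wr: "0 \<le> W b" "W b \<le> 1" for b using Vv_range[OF wF] by (auto simp: W_def)
  have Er: "0 \<le> ?E u" "?E u \<le> 1" using wE lt by (auto simp: wfE_def)
  have IH: "edge ?E u b * V b \<le> edge ?E u b * W b" for b
  proof (cases "edge ?E u b = 0")
    case False
    then have "edge ?E u b > 0" using edge_range[OF wE lt, of b] by auto
    then have "reach ?E (u @ [b]) > 0" using Suc.prems(2) by (simp add: reach_snoc)
    then have "V b \<le> W b" unfolding V_def W_def
      using Suc.hyps(1)[of "u @ [b]"] Suc.hyps(2) lt by simp
    then show ?thesis using edge_range[OF wE lt, of b] by (intro mult_left_mono) auto
  qed simp
  have IH1: "?E u * V True \<le> ?E u * W True" using IH[of True] by (simp add: edge_def)
  have IH0: "(1 - ?E u) * V False \<le> (1 - ?E u) * W False" using IH[of False] by (simp add: edge_def)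
  have VE: "Vv m ?E chi u = ?E u * V True + (1 - ?E u) * V False"
    unfolding V_def by (rule Vv_node[OF lt])
  have VF: "Vv m ?F chi u = ?F u * W True + (1 - ?F u) * W False"
    unfolding W_def by (rule Vv_node[OF lt])
  show ?case
  proof (cases "ctrl u")
    case False
    then have "?F u = ?E u" by (simp add: edgesA_nonA)
    then show ?thesis using VE VF IH1 IH0 by simp
  next
    case A: True
    show ?thesis
    proof (cases "reach ?E u * Vv m ?E chi u > 0")
      case pos: True
      define v where "v = Vv m ?E chi u"
      have vp: "v > 0" using pos Vv_range[OF wE, of chi u] unfolding v_def
        by (cases "Vv m ?E chi u = 0") auto
      have Fu: "?F u = ?E u * V True / v"
        using edgesA_A[where ctrl=ctrl and u=u and m=m and e=e and chi=chi and f=f and k=k, OF A lt] pos by (simp add: V_def v_def)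
      have VE': "v = ?E u * V True + (1 - ?E u) * V False" using VE by (simp add: v_def)
      have F0: "1 - ?F u = (1 - ?E u) * V False / v"
      proof -
        have "1 - ?F u = (v - ?E u * V True) / v" using vp by (simp add: Fu field_simps)
        also have "v - ?E u * V True = (1 - ?E u) * V False" using VE' by simp
        finally show ?thesis .
      qed
      have "Vv m ?F chi u = ?F u * W True + (1 - ?F u) * W False" by (rule VF)
      also have "\<dots> = (?E u * V True / v) * W True + ((1 - ?E u) * V False / v) * W False"
        by (simp only: F0, simp only: Fu)
      also have "\<dots> = (?E u * V True * W True + (1 - ?E u) * V False * W False) / v"
        by (simp add: add_divide_distrib)
      also have "\<dots> \<ge> (?E u * V True * V True + (1 - ?E u) * V False * V False) / v"
      proof -
        have "?E u * V True * V True \<le> ?E u * V True * W True"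
          using IH1 Vr by (metis mult.assoc mult.commute mult_left_mono)
        moreover have "(1 - ?E u) * V False * V False \<le> (1 - ?E u) * V False * W False"
          using IH0 Vr by (metis mult.assoc mult.commute mult_left_mono)
        ultimately show ?thesis using vp by (intro divide_right_mono) auto
      qed
      also have "(?E u * V True * V True + (1 - ?E u) * V False * V False) / v \<ge> v"
      proof -
        have "?E u * V True * V True + (1 - ?E u) * V False * V False - v * v
            = ?E u * (1 - ?E u) * (V True - V False) ^ 2"
          unfolding VE' by (simp add: power2_eq_square algebra_simps)
        also have "\<dots> \<ge> 0" using Er by auto
        finally have "v * v \<le> ?E u * V True * V True + (1 - ?E u) * V False * V False" by simp
        then show ?thesis using vp by (simp add: le_divide_eq)
      qed
      finally show ?thesis by (simp add: v_def)
    next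
      case False
      then have "Vv m ?E chi u \<le> 0" using Suc.prems(2) by (simp add: zero_less_mult_iff not_less)
      then show ?thesis using Vv_range[OF wF, of chi u] by linarith
    qed
  qed
qed

lemma mono_chain:
  assumes wf: "wfE m e" and fr: "frange f" and len: "length u \<le> m"
  shows "(\<forall>i<k. reach (edgesA m ctrl e chi f i) u > 0) \<Longrightarrow> j \<le> k \<Longrightarrow>
     Vv m (edgesA m ctrl e chi f j) chi u \<le> Vv m (edgesA m ctrl e chi f k) chi u"
proof (induction k)
  case 0 then show ?case by simp
next
  case (Suc k)
  show ?case
  proof (cases "j = Suc k")
    case False
    then have "Vv m (edgesA m ctrl e chi f j) chi u \<le> Vv m (edgesA m ctrl e chi f k) chi u"
      using Suc by simp
    also have "\<dots> \<le> Vv m (edgesA m ctrl e chi f (Suc k)) chi u"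
      using mono_step[OF wf fr len] Suc.prems by simp
    finally show ?thesis .
  qed simp
qed

definition PP :: "nat \<Rightarrow> nat \<Rightarrow> (bool list \<Rightarrow> bool) \<Rightarrow> (bool list \<Rightarrow> real) \<Rightarrow> (bool list \<Rightarrow> bool)
    \<Rightarrow> (nat \<Rightarrow> bool list \<Rightarrow> real) \<Rightarrow> bool list \<Rightarrow> real" where
  "PP n m ctrl e chi f u = (\<Prod>k<n. Vv m (edgesA m ctrl e chi f k) chi u)"

lemma PP_Suc: "PP (Suc N) m ctrl e chi f u = PP N m ctrl e chi f u * Vv m (edgesA m ctrl e chi f N) chi u"
  by (simp add: PP_def prod.lessThan_Suc)

lemma ident:
  assumes A: "ctrl u" and lt: "length u < m"
    and pos: "\<And>k. Suc k < n \<Longrightarrow> reach (edgesA m ctrl e chi f k) u > 0 \<and> Vv m (edgesA m ctrl e chi f k) chi u > 0"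
  shows "N < n \<Longrightarrow> edgesA m ctrl e chi f N u * PP N m ctrl e chi f u = e u * PP N m ctrl e chi f (u @ [True]) \<and>
       (1 - edgesA m ctrl e chi f N u) * PP N m ctrl e chi f u = (1 - e u) * PP N m ctrl e chi f (u @ [False])"
proof (induction N)
  case 0 then show ?case by (simp add: PP_def)
next
  case (Suc N)
  let ?E = "edgesA m ctrl e chi f N"
  have IH: "?E u * PP N m ctrl e chi f u = e u * PP N m ctrl e chi f (u @ [True])"
     "(1 - ?E u) * PP N m ctrl e chi f u = (1 - e u) * PP N m ctrl e chi f (u @ [False])"
    using Suc by auto
  have p: "reach ?E u > 0" "Vv m ?E chi u > 0" using pos[of N] Suc.prems by auto
  define v where "v = Vv m ?E chi u"
  define V where "V b = Vv m ?E chi (u @ [b])" for b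
  have vp: "v > 0" using p by (simp add: v_def)
  have Fu: "edgesA m ctrl e chi f (Suc N) u = ?E u * V True / v"
    using edgesA_A[where ctrl=ctrl and u=u and m=m and e=e and chi=chi and f=f and k=N, OF A lt] p by (simp add: V_def v_def)
  have VE: "v = ?E u * V True + (1 - ?E u) * V False"
    unfolding V_def v_def by (rule Vv_node[OF lt])
  have PS: "PP (Suc N) m ctrl e chi f w = PP N m ctrl e chi f w * Vv m ?E chi w" for w
    by (rule PP_Suc)
  have g1: "edgesA m ctrl e chi f (Suc N) u * PP (Suc N) m ctrl e chi f u = e u * PP (Suc N) m ctrl e chi f (u @ [True])"
  proof -
    have "edgesA m ctrl e chi f (Suc N) u * PP (Suc N) m ctrl e chi f u
        = (?E u * PP N m ctrl e chi f u) * V True"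
      using vp by (simp add: Fu PS v_def[symmetric])
    also have "\<dots> = e u * PP (Suc N) m ctrl e chi f (u @ [True])"
      by (simp add: IH(1) PS V_def)
    finally show ?thesis .
  qed
  have g0: "(1 - edgesA m ctrl e chi f (Suc N) u) * PP (Suc N) m ctrl e chi f u = (1 - e u) * PP (Suc N) m ctrl e chi f (u @ [False])"
  proof -
    have "(1 - edgesA m ctrl e chi f (Suc N) u) * PP (Suc N) m ctrl e chi f u
        = (v - ?E u * V True) * PP N m ctrl e chi f u"
      using vp by (simp add: Fu PS v_def[symmetric] field_simps)
    also have "v - ?E u * V True = (1 - ?E u) * V False"
      using VE by simp
    also have "(1 - ?E u) * V False * PP N m ctrl e chi f u = ((1 - ?E u) * PP N m ctrl e chi f u) * V False"
      by (simp add: algebra_simps)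
    also have "\<dots> = (1 - e u) * PP (Suc N) m ctrl e chi f (u @ [False])"
      by (simp add: IH(2) PS V_def)
    finally show ?thesis .
  qed
  show ?case using g1 g0 by blast
qed

lemma PP_ident:
  assumes A: "ctrl u" and lt: "length u < m" and n: "1 \<le> n"
    and pos: "\<And>k. Suc k < n \<Longrightarrow> reach (edgesA m ctrl e chi f k) u > 0 \<and> Vv m (edgesA m ctrl e chi f k) chi u > 0"
  shows "PP n m ctrl e chi f u = e u * PP n m ctrl e chi f (u @ [True]) + (1 - e u) * PP n m ctrl e chi f (u @ [False])"
proof -
  obtain N where nN: "n = Suc N" using n by (cases n) auto
  let ?E = "edgesA m ctrl e chi f N"
  have I: "?E u * PP N m ctrl e chi f u = e u * PP N m ctrl e chi f (u @ [True])"
     "(1 - ?E u) * PP N m ctrl e chi f u = (1 - e u) * PP N m ctrl e chi f (u @ [False])"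
    using ident[where N=N, OF A lt pos] nN by auto
  have "PP n m ctrl e chi f u = PP N m ctrl e chi f u * (?E u * Vv m ?E chi (u @ [True]) + (1 - ?E u) * Vv m ?E chi (u @ [False]))"
    using nN PP_Suc Vv_node[OF lt] by simp
  also have "\<dots> = (?E u * PP N m ctrl e chi f u) * Vv m ?E chi (u @ [True]) + ((1 - ?E u) * PP N m ctrl e chi f u) * Vv m ?E chi (u @ [False])"
    by (simp add: algebra_simps)
  also have "\<dots> = e u * PP n m ctrl e chi f (u @ [True]) + (1 - e u) * PP n m ctrl e chi f (u @ [False])"
    unfolding I nN PP_Suc by (simp add: algebra_simps)
  finally show ?thesis .
qed


definition Live :: "nat \<Rightarrow> nat \<Rightarrow> (bool list \<Rightarrow> bool) \<Rightarrow> (bool list \<Rightarrow> real) \<Rightarrow> (bool list \<Rightarrow> bool)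
    \<Rightarrow> (nat \<Rightarrow> bool list \<Rightarrow> real) \<Rightarrow> bool list \<Rightarrow> bool" where
  "Live n m ctrl e chi f u \<longleftrightarrow> (\<forall>k<n. reach (edgesA m ctrl e chi f k) u > 0)"

lemma PP_range:
  assumes "wfE m e" "frange f"
  shows "0 \<le> PP n m ctrl e chi f u \<and> PP n m ctrl e chi f u \<le> 1"
proof -
  have "0 \<le> Vv m (edgesA m ctrl e chi f k) chi u \<and> Vv m (edgesA m ctrl e chi f k) chi u \<le> 1" for k
    using Vv_range[OF wfE_edgesA[OF assms]] by blast
  then show ?thesis unfolding PP_def by (auto intro: prod_nonneg prod_le_1)
qed

lemma all_one:
  assumes wf: "wfE m e" and fr: "frange f" and len: "length u \<le> m"
    and L: "Live n m ctrl e chi f u" and one: "Vv m e chi u = 1"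
  shows "PP n m ctrl e chi f u = 1"
proof -
  have "Vv m (edgesA m ctrl e chi f k) chi u = 1" if k: "k < n" for k
  proof -
    have "Vv m (edgesA m ctrl e chi f 0) chi u \<le> Vv m (edgesA m ctrl e chi f k) chi u"
      using L k by (intro mono_chain[OF wf fr len]) (auto simp: Live_def)
    moreover have "Vv m (edgesA m ctrl e chi f k) chi u \<le> 1"
      using Vv_range[OF wfE_edgesA[OF wf fr]] by blast
    ultimately show ?thesis using one by simp
  qed
  then show ?thesis unfolding PP_def by (simp add: prod.neutral)
qed

lemma pos_chain:
  assumes wf: "wfE m e" and fr: "frange f" and len: "length u \<le> m"
    and L: "Live n m ctrl e chi f u" and p: "0 < Vv m e chi u" and k: "k < n"
  shows "0 < Vv m (edgesA m ctrl e chi f k) chi u"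
proof -
  have "Vv m (edgesA m ctrl e chi f 0) chi u \<le> Vv m (edgesA m ctrl e chi f k) chi u"
    using L k by (intro mono_chain[OF wf fr len]) (auto simp: Live_def)
  then show ?thesis using p by simp
qed

lemma step_A:
  assumes wf: "wfE m e" and fA: "frange fA" and fB: "frange fB" and n: "2 \<le> n"
    and A: "ctrl u" and lt: "length u < m"
    and LA: "Live n m ctrl e chi fA u" and LB: "Live n m (\<lambda>u. \<not> ctrl u) e (\<lambda>l. \<not> chi l) fB u"
    and IH: "\<And>b. Live n m ctrl e chi fA (u @ [b]) \<Longrightarrow> Live n m (\<lambda>u. \<not> ctrl u) e (\<lambda>l. \<not> chi l) fB (u @ [b]) \<Longrightarrow>
              Rg n (PP n m ctrl e chi fA (u @ [b])) (PP n m (\<lambda>u. \<not> ctrl u) e (\<lambda>l. \<not> chi l) fB (u @ [b]))"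
  shows "Rg n (PP n m ctrl e chi fA u) (PP n m (\<lambda>u. \<not> ctrl u) e (\<lambda>l. \<not> chi l) fB u)"
proof -
  let ?c = "\<lambda>u. \<not> ctrl u" and ?x = "\<lambda>l. \<not> chi l"
  let ?P = "PP n m ctrl e chi fA" and ?Q = "PP n m ?c e ?x fB"
  let ?E = "edgesA m ctrl e chi fA" and ?F = "edgesA m ?c e ?x fB"
  have n1: "1 \<le> n" using n by simp
  have lu: "length u \<le> m" using lt by simp
  have Pr: "0 \<le> ?P v \<and> ?P v \<le> 1" for v using PP_range[OF wf fA] by blast
  have Qr: "0 \<le> ?Q v \<and> ?Q v \<le> 1" for v using PP_range[OF wf fB] by blast
  have a0r: "0 \<le> Vv m e chi v \<and> Vv m e chi v \<le> 1" for v using Vv_range[OF wf] by blast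
  have er: "0 \<le> e u" "e u \<le> 1" using wf lt by (auto simp: wfE_def)
  show ?thesis
  proof (cases "Vv m e chi u = 0")
    case True
    then have "Vv m e ?x u = 1" by (simp add: Vv_compl)
    then have "?Q u = 1" by (rule all_one[OF wf fB lu LB])
    then show ?thesis using Rg_G1[OF n1] Pr[of u] by simp
  next
    case a0nz: False
    show ?thesis
    proof (cases "Vv m e chi u = 1")
      case True
      then have "?P u = 1" by (rule all_one[OF wf fA lu LA])
      then show ?thesis using Rg_1H[OF n1] Qr[of u] by simp
    next
      case a0n1: False
      have a0p: "0 < Vv m e chi u" using a0nz a0r[of u] by simp
      have posk: "0 < Vv m (?E k) chi u" if "k < n" for k
        using pos_chain[OF wf fA lu LA a0p that] .
      have pos: "reach (?E k) u > 0 \<and> Vv m (?E k) chi u > 0" if "Suc k < n" for k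
        using LA posk that by (auto simp: Live_def)
      have Pid: "?P u = e u * ?P (u @ [True]) + (1 - e u) * ?P (u @ [False])"
        by (rule PP_ident[OF A lt n1 pos])
      have Fe: "?F k u = e u" for k using A by (simp add: edgesA_nonA)
      define \<beta> where "\<beta> k = Vv m (?F k) ?x (u @ [True])" for k
      define \<gamma> where "\<gamma> k = Vv m (?F k) ?x (u @ [False])" for k
      have bk: "Vv m (?F k) ?x u = e u * \<beta> k + (1 - e u) * \<gamma> k" for k
        using Vv_node[OF lt, of "?F k" ?x] Fe[of k] by (simp add: \<beta>_def \<gamma>_def)
      have Qid: "?Q u = (\<Prod>k<n. e u * \<beta> k + (1 - e u) * \<gamma> k)"
        unfolding PP_def using bk by simp
      have Q1: "?Q (u @ [True]) = (\<Prod>k<n. \<beta> k)" by (simp add: PP_def \<beta>_def)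
      have Q0: "?Q (u @ [False]) = (\<Prod>k<n. \<gamma> k)" by (simp add: PP_def \<gamma>_def)
      have br: "0 \<le> \<beta> k \<and> \<beta> k \<le> 1" "0 \<le> \<gamma> k \<and> \<gamma> k \<le> 1" for k
        using Vv_range[OF wfE_edgesA[OF wf fB]] by (auto simp: \<beta>_def \<gamma>_def)
      have child: "Rg n (?P (u @ [b])) (?Q (u @ [b]))" if eb: "edge e u b > 0" for b
      proof -
        have LBc: "Live n m ?c e ?x fB (u @ [b])"
          unfolding Live_def
        proof (intro allI impI)
          fix k assume "k < n"
          then have "reach (?F k) u > 0" using LB by (auto simp: Live_def)
          moreover have "edge (?F k) u b = edge e u b" using Fe[of k] by (simp add: edge_def)
          ultimately show "reach (?F k) (u @ [b]) > 0" using eb by (simp add: reach_snoc)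
        qed
        have lub: "length (u @ [b]) \<le> m" using lt by simp
        show ?thesis
        proof (cases "Live n m ctrl e chi fA (u @ [b])")
          case True then show ?thesis using IH LBc by blast
        next
          case False
          then obtain k where k: "k < n" "\<not> 0 < reach (?E k) (u @ [b])" by (auto simp: Live_def)
          define k0 where "k0 = (LEAST k. \<not> 0 < reach (?E k) (u @ [b]))"
          have k0: "\<not> 0 < reach (?E k0) (u @ [b])" unfolding k0_def by (rule LeastI[of _ k]) (use k in auto)
          have k0le: "k0 \<le> k" unfolding k0_def by (rule Least_le) (use k in auto)
          have k0min: "0 < reach (?E i) (u @ [b])" if "i < k0" for i
            using not_less_Least[of i "\<lambda>k. \<not> 0 < reach (?E k) (u @ [b])"] that unfolding k0_def by auto
          have k0n: "k0 < n" using k0le k by simp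
          have ru: "reach (?E k0) u > 0" using LA k0n by (auto simp: Live_def)
          have eg: "0 \<le> edge (?E k0) u b" using edge_range[OF wfE_edgesA[OF wf fA] lt] by blast
          have edge0: "edge (?E k0) u b = 0"
          proof -
            have "reach (?E k0) u * edge (?E k0) u b \<le> 0" using k0 by (simp add: reach_snoc)
            then have "edge (?E k0) u b \<le> 0" using ru by (simp add: mult_le_0_iff)
            then show ?thesis using eg by simp
          qed
          have idk: "edge (?E k0) u b * PP k0 m ctrl e chi fA u = edge e u b * PP k0 m ctrl e chi fA (u @ [b])"
            using ident[where N=k0, OF A lt pos] k0n by (cases b) (auto simp: edge_def)
          have Ppos: "0 < PP k0 m ctrl e chi fA u"
            unfolding PP_def using posk k0n by (intro prod_pos) auto
          have "PP k0 m ctrl e chi fA (u @ [b]) = 0" using idk edge0 eb by simp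
          then obtain j where j: "j < k0" "Vv m (?E j) chi (u @ [b]) = 0"
            unfolding PP_def by (auto simp: prod_zero_iff)
          have "Vv m (?E 0) chi (u @ [b]) \<le> Vv m (?E j) chi (u @ [b])"
            using k0min j by (intro mono_chain[OF wf fA lub]) auto
          then have "Vv m e chi (u @ [b]) \<le> 0" using j by simp
          then have "Vv m e chi (u @ [b]) = 0" using a0r[of "u @ [b]"] by simp
          then have "Vv m e ?x (u @ [b]) = 1" by (simp add: Vv_compl)
          then have "?Q (u @ [b]) = 1" by (rule all_one[OF wf fB lub LBc])
          then show ?thesis using Rg_G1[OF n1] Pr[of "u @ [b]"] by simp
        qed
      qed
      show ?thesis
      proof (cases "e u = 0")
        case True
        have "Rg n (?P (u @ [False])) (?Q (u @ [False]))" using child[of False] True by (simp add: edge_def)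
        then show ?thesis using Pid Qid Q0 True by simp
      next
        case e0: False
        show ?thesis
        proof (cases "e u = 1")
          case True
          have "Rg n (?P (u @ [True])) (?Q (u @ [True]))" using child[of True] True by (simp add: edge_def)
          then show ?thesis using Pid Qid Q1 True by simp
        next
          case False
          have c1: "Rg n (?P (u @ [True])) (\<Prod>k<n. \<beta> k)" using child[of True] e0 er Q1 by (simp add: edge_def)
          have c0: "Rg n (?P (u @ [False])) (\<Prod>k<n. \<gamma> k)" using child[of False] False er Q0 by (simp add: edge_def)
          show ?thesis unfolding Pid Qid by (rule Rg_comb[OF n er c1 c0 br])
        qed
      qed
    qed
  qed
qed

lemma main_claim:
  assumes wf: "wfE m e" and n: "2 \<le> n"
  shows "frange fA \<Longrightarrow> frange fB \<Longrightarrow> length u \<le> m \<Longrightarrow> Live n m ctrl e chi fA u \<Longrightarrow>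
    Live n m (\<lambda>u. \<not> ctrl u) e (\<lambda>l. \<not> chi l) fB u \<Longrightarrow>
    Rg n (PP n m ctrl e chi fA u) (PP n m (\<lambda>u. \<not> ctrl u) e (\<lambda>l. \<not> chi l) fB u)"
proof (induction "m - length u" arbitrary: u ctrl chi fA fB)
  case 0
  then have lm: "m \<le> length u" by simp
  have n1: "1 \<le> n" using n by simp
  have cst: "(\<Prod>k<n. c) = c" if "c = 0 \<or> c = (1::real)" for c
    using that n1 by auto
  have P: "PP n m ctrl e chi fA u = (if chi u then 1 else 0)"
    unfolding PP_def Vv_leaf[OF lm] by (rule cst) simp
  have Q: "PP n m (\<lambda>u. \<not> ctrl u) e (\<lambda>l. \<not> chi l) fB u = (if chi u then 0 else 1)"
    unfolding PP_def Vv_leaf[OF lm] by (subst cst) auto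
  show ?case using P Q Rg_G1[OF n1, of 0] Rg_1H[OF n1, of 0] by simp
next
  case (Suc d)
  have lt: "length u < m" using Suc.hyps(2) by simp
  show ?case
  proof (cases "ctrl u")
    case True
    show ?thesis
    proof (rule step_A[OF wf Suc.prems(1,2) n True lt Suc.prems(4,5)])
      fix b
      assume L1: "Live n m ctrl e chi fA (u @ [b])" and L2: "Live n m (\<lambda>u. \<not> ctrl u) e (\<lambda>l. \<not> chi l) fB (u @ [b])"
      show "Rg n (PP n m ctrl e chi fA (u @ [b])) (PP n m (\<lambda>u. \<not> ctrl u) e (\<lambda>l. \<not> chi l) fB (u @ [b]))"
        by (rule Suc.hyps(1)) (use Suc.hyps(2) Suc.prems(1,2) lt L1 L2 in simp_all)
    qed
  next
    case False
    have LA': "Live n m (\<lambda>u. \<not> (\<not> ctrl u)) e (\<lambda>l. \<not> (\<not> chi l)) fA u" using Suc.prems(4) by simp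
    have "Rg n (PP n m (\<lambda>u. \<not> ctrl u) e (\<lambda>l. \<not> chi l) fB u) (PP n m (\<lambda>u. \<not> (\<not> ctrl u)) e (\<lambda>l. \<not> (\<not> chi l)) fA u)"
    proof (rule step_A[OF wf Suc.prems(2,1) n _ lt Suc.prems(5) LA'])
      show "\<not> ctrl u" by fact
      fix b
      assume L1: "Live n m (\<lambda>u. \<not> ctrl u) e (\<lambda>l. \<not> chi l) fB (u @ [b])"
        and L2: "Live n m (\<lambda>u. \<not> (\<not> ctrl u)) e (\<lambda>l. \<not> (\<not> chi l)) fA (u @ [b])"
      show "Rg n (PP n m (\<lambda>u. \<not> ctrl u) e (\<lambda>l. \<not> chi l) fB (u @ [b]))
          (PP n m (\<lambda>u. \<not> (\<not> ctrl u)) e (\<lambda>l. \<not> (\<not> chi l)) fA (u @ [b]))"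
        by (rule Suc.hyps(1)) (use Suc.hyps(2) Suc.prems(1,2) lt L1 L2 in simp_all)
    qed
    then have "Rg n (PP n m (\<lambda>u. \<not> ctrl u) e (\<lambda>l. \<not> chi l) fB u) (PP n m ctrl e chi fA u)" by simp
    then show ?thesis using Rg_sym n by simp
  qed
qed


lemma numeric:
  fixes \<epsilon> :: real
  assumes e: "0 < \<epsilon>" "\<epsilon> \<le> 1/2"
  defines "\<kappa> \<equiv> nat \<lfloor>5 * ln (1 / \<epsilon>) / \<epsilon>\<rfloor>"
  shows "real \<kappa> \<le> 5 * (1 / \<epsilon>) * ln (1 / \<epsilon>) ^ 1" "2 \<le> Suc \<kappa>"
    "(1 - \<epsilon>) ^ Suc \<kappa> < 1 / (real (Suc \<kappa>) + 1)"
proof -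
  define L where "L = ln (1 / \<epsilon>)"
  define y where "y = 5 * L / \<epsilon>"
  have Lm: "L = - ln \<epsilon>" using e by (simp add: L_def ln_div)
  have "ln \<epsilon> \<le> \<epsilon> - 1" using e by (intro ln_le_minus_one) auto
  then have L1: "1 - \<epsilon> \<le> L" using Lm by simp
  have "ln (1 / \<epsilon>) \<le> 1 / \<epsilon> - 1" using e by (intro ln_le_minus_one) auto
  then have L2: "L \<le> 1 / \<epsilon>" by (simp add: L_def)
  have Lh: "1/2 \<le> L" using L1 e by simp
  have ie: "2 \<le> 1 / \<epsilon>" using e by (simp add: field_simps)
  have "5 \<le> y"
  proof -
    have "5 * (1/2) * 2 \<le> 5 * L * (1 / \<epsilon>)" using Lh ie by (intro mult_mono) auto
    then show ?thesis by (simp add: y_def)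
  qed
  have y0: "0 \<le> y" using \<open>5 \<le> y\<close> by simp
  have ky: "real \<kappa> = of_int \<lfloor>y\<rfloor>" using y0 by (simp add: \<kappa>_def y_def L_def)
  have k1: "real \<kappa> \<le> y" using ky by simp
  have k2: "y < real \<kappa> + 1" using ky by linarith
  show "real \<kappa> \<le> 5 * (1 / \<epsilon>) * ln (1 / \<epsilon>) ^ 1" using k1 by (simp add: y_def L_def)
  have "4 \<le> real \<kappa>" using k2 \<open>5 \<le> y\<close> by simp
  then show "2 \<le> Suc \<kappa>" by simp
  define n where "n = Suc \<kappa>"
  have ny: "y \<le> real n" "real n \<le> y + 1" using k1 k2 by (simp_all add: n_def)
  have "(1 - \<epsilon>) ^ n \<le> exp (- \<epsilon>) ^ n"
    using e exp_ge_add_one_self[of "- \<epsilon>"] by (intro power_mono) auto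
  also have "\<dots> = exp (- (\<epsilon> * real n))" by (simp add: exp_of_nat_mult[symmetric] mult.commute)
  also have "\<dots> \<le> exp (- (\<epsilon> * y))"
  proof -
    have "\<epsilon> * y \<le> \<epsilon> * real n" using ny e by (intro mult_left_mono) auto
    then show ?thesis by simp
  qed
  also have "- (\<epsilon> * y) = real 5 * ln \<epsilon>" using e by (simp add: y_def Lm)
  also have "exp (real 5 * ln \<epsilon>) = \<epsilon> ^ 5" by (subst exp_of_nat_mult) (simp add: e)
  finally have p5: "(1 - \<epsilon>) ^ n \<le> \<epsilon> ^ 5" .
  have "\<epsilon> ^ 5 * (real n + 1) \<le> \<epsilon> ^ 5 * (y + 2)" using ny e by (intro mult_left_mono) auto
  also have "\<epsilon> ^ 5 * (y + 2) = 5 * \<epsilon> ^ 4 * L + 2 * \<epsilon> ^ 5" using e by (simp add: y_def field_simps power_eq_if)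
  also have "5 * \<epsilon> ^ 4 * L \<le> 5 * \<epsilon> ^ 4 * (1 / \<epsilon>)" using L2 e by (intro mult_left_mono) auto
  also have "5 * \<epsilon> ^ 4 * (1 / \<epsilon>) = 5 * \<epsilon> ^ 3" using e by (simp add: power_eq_if field_simps)
  also have "\<epsilon> ^ 3 \<le> (1/2) ^ 3" using e by (intro power_mono) auto
  also have "\<epsilon> ^ 5 \<le> (1/2) ^ 5" using e by (intro power_mono) auto
  finally have "\<epsilon> ^ 5 * (real n + 1) \<le> 5 * (1/2) ^ 3 + 2 * (1/2) ^ 5" by simp
  then have "\<epsilon> ^ 5 * (real n + 1) < 1" by (simp add: power_divide)
  then have "(1 - \<epsilon>) ^ n * (real n + 1) < 1"
    using p5 by (smt (verit) mult_right_mono of_nat_0_le_iff)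
  then show "(1 - \<epsilon>) ^ Suc \<kappa> < 1 / (real (Suc \<kappa>) + 1)"
    unfolding n_def[symmetric] by (simp add: field_simps)
qed


theorem theorem3p3:
  shows "\<exists>(c::real) (d::nat). \<forall>\<epsilon>::real. 0 < \<epsilon> \<and> \<epsilon> \<le> 1/2 \<longrightarrow>
     (\<exists>\<kappa>::nat. real \<kappa> \<le> c * (1/\<epsilon>) * (ln (1/\<epsilon>)) ^ d \<and>
        (\<forall>(m::nat) (ctrl::bool list \<Rightarrow> bool) (e::bool list \<Rightarrow> real) (chi::bool list \<Rightarrow> bool)
            (fA::nat \<Rightarrow> bool list \<Rightarrow> real) (fB::nat \<Rightarrow> bool list \<Rightarrow> real).
           wf_protocol m e \<longrightarrow>
           (\<forall>i u. 0 \<le> fA i u \<and> fA i u \<le> 1 \<and> 0 \<le> fB i u \<and> fB i u \<le> 1) \<longrightarrow>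
           val m (edgesA m ctrl e chi fA \<kappa>) chi > 1 - \<epsilon> \<or>
           val m (edgesB m ctrl e chi fB \<kappa>) chi < \<epsilon>))"
proof (rule exI[of _ 5], rule exI[of _ 1], intro allI impI)
  fix \<epsilon> :: real
  assume eps: "0 < \<epsilon> \<and> \<epsilon> \<le> 1/2"
  define \<kappa> where "\<kappa> = nat \<lfloor>5 * ln (1 / \<epsilon>) / \<epsilon>\<rfloor>"
  define n where "n = Suc \<kappa>"
  have num: "real \<kappa> \<le> 5 * (1 / \<epsilon>) * ln (1 / \<epsilon>) ^ 1" "2 \<le> n" "(1 - \<epsilon>) ^ n < 1 / (real n + 1)"
    using numeric[of \<epsilon>] eps unfolding \<kappa>_def n_def by auto
  show "\<exists>\<kappa>::nat. real \<kappa> \<le> 5 * (1/\<epsilon>) * (ln (1/\<epsilon>)) ^ 1 \<and>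
        (\<forall>(m::nat) (ctrl::bool list \<Rightarrow> bool) (e::bool list \<Rightarrow> real) (chi::bool list \<Rightarrow> bool)
            (fA::nat \<Rightarrow> bool list \<Rightarrow> real) (fB::nat \<Rightarrow> bool list \<Rightarrow> real).
           wf_protocol m e \<longrightarrow>
           (\<forall>i u. 0 \<le> fA i u \<and> fA i u \<le> 1 \<and> 0 \<le> fB i u \<and> fB i u \<le> 1) \<longrightarrow>
           val m (edgesA m ctrl e chi fA \<kappa>) chi > 1 - \<epsilon> \<or>
           val m (edgesB m ctrl e chi fB \<kappa>) chi < \<epsilon>)"
  proof (intro exI[of _ \<kappa>] conjI allI impI)
    show "real \<kappa> \<le> 5 * (1/\<epsilon>) * (ln (1/\<epsilon>)) ^ 1" by (rule num(1))
    fix m :: nat and ctrl :: "bool list \<Rightarrow> bool" and e :: "bool list \<Rightarrow> real" and chi :: "bool list \<Rightarrow> bool"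
      and fA fB :: "nat \<Rightarrow> bool list \<Rightarrow> real"
    assume wfp: "wf_protocol m e"
      and fr: "\<forall>i u. 0 \<le> fA i u \<and> fA i u \<le> 1 \<and> 0 \<le> fB i u \<and> fB i u \<le> 1"
    have wf: "wfE m e" using wfp by (simp add: wf_protocol_def wfE_def)
    have fA: "frange fA" and fB: "frange fB" using fr by (auto simp: frange_def)
    let ?c = "\<lambda>u. \<not> ctrl u" and ?x = "\<lambda>l. \<not> chi l"
    have LA: "Live n m ctrl e chi fA []" by (simp add: Live_def)
    have LB: "Live n m ?c e ?x fB []" by (simp add: Live_def)
    have R: "Rg n (PP n m ctrl e chi fA []) (PP n m ?c e ?x fB [])"
      by (rule main_claim[OF wf num(2) fA fB _ LA LB]) simp
    have S: "sS n \<le> PP n m ctrl e chi fA [] \<or> sS n \<le> PP n m ?c e ?x fB []"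
      using Rg_s[OF _ R] num(2) by simp
    show "val m (edgesA m ctrl e chi fA \<kappa>) chi > 1 - \<epsilon> \<or> val m (edgesB m ctrl e chi fB \<kappa>) chi < \<epsilon>"
    proof (rule ccontr)
      assume "\<not> ?thesis"
      then have a: "Vv m (edgesA m ctrl e chi fA \<kappa>) chi [] \<le> 1 - \<epsilon>"
        and b: "\<epsilon> \<le> Vv m (edgesA m ?c e ?x fB \<kappa>) chi []"
        by (auto simp: val_Vv edgesB_dual)
      have b': "Vv m (edgesA m ?c e ?x fB \<kappa>) ?x [] \<le> 1 - \<epsilon>"
        using b by (simp add: Vv_compl)
      have bound: "PP n m ctr e ch f [] \<le> (1 - \<epsilon>) ^ n"
        if fr': "frange f" and top: "Vv m (edgesA m ctr e ch f \<kappa>) ch [] \<le> 1 - \<epsilon>" for ctr ch f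
      proof -
        have "PP n m ctr e ch f [] \<le> (\<Prod>k<n. (1 - \<epsilon>))"
          unfolding PP_def
        proof (rule prod_mono)
          fix k assume k: "k \<in> {..<n}"
          have "0 \<le> Vv m (edgesA m ctr e ch f k) ch []"
            using Vv_range[OF wfE_edgesA[OF wf fr']] by blast
          moreover have "Vv m (edgesA m ctr e ch f k) ch [] \<le> Vv m (edgesA m ctr e ch f \<kappa>) ch []"
            using k by (intro mono_chain[OF wf fr']) (auto simp: n_def)
          ultimately show "0 \<le> Vv m (edgesA m ctr e ch f k) ch [] \<and> Vv m (edgesA m ctr e ch f k) ch [] \<le> 1 - \<epsilon>"
            using top by simp
        qed
        then show ?thesis by simp
      qed
      have p1: "PP n m ctrl e chi fA [] \<le> (1 - \<epsilon>) ^ n" by (rule bound[OF fA a])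
      have p2: "PP n m ?c e ?x fB [] \<le> (1 - \<epsilon>) ^ n" by (rule bound[OF fB b'])
      have "sS n = 1 / (real n + 1)" by (simp add: sS_def)
      then show False using S p1 p2 num(3) by linarith
    qed
  qed
qed


end
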